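(* Let $A$ be an $n\times n$ array with exactly $\beta n^2$ distinct symbols. If row $i$ of $A$ contains $d\ge 1$ cells whose symbols are clones, then there is a cell $(i,j)$ in row $i$ whose symbol $A_{ij}$ is a clone and such that $$|R_i(A)\cup C_j(A)|\ \ge\ |R_i(A)|+\frac{\beta n^2-(n-d)(n-1)-|R_i(A)|}{d}.$$
   Context: An $n\times n$ array has a symbol in each cell (symbols may repeat arbitrarily). A symbol is a singleton if it occurs exactly once in the array and a clone otherwise; we say $A_{ij}$ is a clone (singleton) if the symbol in cell $(i,j)$ is a clone (singleton). $R_i(A)$ and $C_j(A)$ denote the sets of symbols occurring in row $i$ and column $j$ of $A$, respectively. *)

theory Defs
  imports Complex_Main
begin

text \<open>An n x n array is modelled as a function A :: nat => nat => 'a, of which only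
the entries A i j with i < n and j < n are relevant.\<close>

definition cells :: "nat \<Rightarrow> (nat \<times> nat) set" where
  "cells n = {0..<n} \<times> {0..<n}"

definition symbols :: "nat \<Rightarrow> (nat \<Rightarrow> nat \<Rightarrow> 'a) \<Rightarrow> 'a set" where
  "symbols n A = (\<lambda>(i, j). A i j) ` cells n"

definition occurrences :: "nat \<Rightarrow> (nat \<Rightarrow> nat \<Rightarrow> 'a) \<Rightarrow> 'a \<Rightarrow> nat" where
  "occurrences n A s = card {(i, j) \<in> cells n. A i j = s}"

definition is_clone :: "nat \<Rightarrow> (nat \<Rightarrow> nat \<Rightarrow> 'a) \<Rightarrow> 'a \<Rightarrow> bool" where
  "is_clone n A s \<longleftrightarrow> occurrences n A s \<ge> 2"

definition is_singleton :: "nat \<Rightarrow> (nat \<Rightarrow> nat \<Rightarrow> 'a) \<Rightarrow> 'a \<Rightarrow> bool" where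
  "is_singleton n A s \<longleftrightarrow> occurrences n A s = 1"

definition row_syms :: "nat \<Rightarrow> (nat \<Rightarrow> nat \<Rightarrow> 'a) \<Rightarrow> nat \<Rightarrow> 'a set" where
  "row_syms n A i = (\<lambda>j. A i j) ` {0..<n}"

definition col_syms :: "nat \<Rightarrow> (nat \<Rightarrow> nat \<Rightarrow> 'a) \<Rightarrow> nat \<Rightarrow> 'a set" where
  "col_syms n A j = (\<lambda>i. A i j) ` {0..<n}"

end

theory Submission
  imports Defs
begin

theorem mainTheorem4:
  fixes A :: "nat \<Rightarrow> nat \<Rightarrow> 'a" and n i d :: nat and \<beta> :: real
  assumes "real (card (symbols n A)) = \<beta> * real n ^ 2"
    and "i < n"
    and "d = card {j \<in> {0..<n}. is_clone n A (A i j)}"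
    and "d \<ge> 1"
  shows "\<exists>j<n. is_clone n A (A i j) \<and>
     real (card (row_syms n A i \<union> col_syms n A j)) \<ge>
       real (card (row_syms n A i))
       + (\<beta> * real n ^ 2 - (real n - real d) * (real n - 1) - real (card (row_syms n A i))) / real d"
proof -
  define R where "R = row_syms n A i"
  define D where "D = {j \<in> {0..<n}. is_clone n A (A i j)}"
  define f where "f j = card (col_syms n A j - R)" for j
  have finR: "finite R" unfolding R_def row_syms_def by simp
  have finC: "finite (col_syms n A j)" for j unfolding col_syms_def by simp
  have symU: "symbols n A = (\<Union>j\<in>{0..<n}. col_syms n A j)"
    unfolding symbols_def col_syms_def cells_def by auto
  have Rsub: "R \<subseteq> symbols n A" unfolding R_def row_syms_def symbols_def cells_def
    using assms(2) by auto
  have finS: "finite (symbols n A)" unfolding symbols_def cells_def by simp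
  have c1: "card (symbols n A - R) = card (symbols n A) - card R"
    using Rsub finR by (simp add: card_Diff_subset)
  have cRS: "card R \<le> card (symbols n A)" using Rsub finS card_mono by blast
  have "symbols n A - R = (\<Union>j\<in>{0..<n}. col_syms n A j - R)" using symU by auto
  hence c2: "card (symbols n A - R) \<le> (\<Sum>j\<in>{0..<n}. f j)"
    unfolding f_def using card_UN_le[of "{0..<n}" "\<lambda>j. col_syms n A j - R"] by simp
  have fle: "f j \<le> n - 1" if "j < n" for j
  proof -
    have "col_syms n A j - R \<subseteq> (\<lambda>k. A k j) ` ({0..<n} - {i})"
      unfolding col_syms_def R_def row_syms_def using that by auto
    hence "f j \<le> card ((\<lambda>k. A k j) ` ({0..<n} - {i}))" unfolding f_def
      by (intro card_mono) auto
    also have "\<dots> \<le> card ({0..<n} - {i})" by (rule card_image_le) simp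
    finally have "f j \<le> card ({0..<n} - {i})" .
    thus ?thesis using assms(2) by simp
  qed
  have Dsub: "D \<subseteq> {0..<n}" unfolding D_def by auto
  have splitS: "(\<Sum>j\<in>{0..<n}. f j) = (\<Sum>j\<in>D. f j) + (\<Sum>j\<in>{0..<n}-D. f j)"
    using sum.subset_diff[OF Dsub, of f] by (simp add: add.commute)
  have "(\<Sum>j\<in>{0..<n}-D. f j) \<le> (\<Sum>j\<in>{0..<n}-D. n - 1)"
    by (rule sum_mono) (use fle in auto)
  also have "\<dots> = (n - d) * (n - 1)"
    proof -
    have "finite D" using Dsub finite_subset by blast
    have dD: "d = card D" using assms(3) unfolding D_def .
    have "card ({0..<n} - D) = card {0..<n} - card D"
      by (rule card_Diff_subset[OF \<open>finite D\<close> Dsub])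
    hence "card ({0..<n} - D) = n - d" using dD by simp
    thus ?thesis by (simp only: sum_constant of_nat_id)
  qed
  finally have s2: "(\<Sum>j\<in>{0..<n}-D. f j) \<le> (n - d) * (n - 1)" .
  have finD: "finite D" "D \<noteq> {}" using Dsub assms(3,4) unfolding D_def[symmetric]
    by (auto intro: finite_subset)
  obtain j0 where j0: "j0 \<in> D" "\<And>j. j \<in> D \<Longrightarrow> f j \<le> f j0"
  proof -
    have "Max (f ` D) \<in> f ` D" using finD by simp
    then obtain j0 where jj: "j0 \<in> D" "f j0 = Max (f ` D)" by force
    moreover have "f j \<le> f j0" if "j \<in> D" for j using finD that jj(2) by simp
    ultimately show ?thesis using that by blast
  qed
  have "(\<Sum>j\<in>D. f j) \<le> (\<Sum>j\<in>D. f j0)" by (rule sum_mono) (use j0 in auto)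
  hence s1: "(\<Sum>j\<in>D. f j) \<le> d * f j0" using assms(3) unfolding D_def[symmetric] by simp
  have dn: "d \<le> n" using assms(3) Dsub unfolding D_def[symmetric]
    using card_mono[OF _ Dsub] by simp
  have key: "card (symbols n A) - card R \<le> d * f j0 + (n - d) * (n - 1)"
    using c1 c2 splitS s1 s2 by linarith
  have keyr: "real (card (symbols n A)) - real (card R) - (real n - real d) * (real n - 1) \<le> real d * real (f j0)"
  proof -
    have "real (card (symbols n A) - card R) \<le> real (d * f j0 + (n - d) * (n - 1))"
      using key by linarith
    moreover have "real ((n - d) * (n - 1)) = (real n - real d) * (real n - 1)"
      using dn assms(2) by (simp add: of_nat_diff)
    ultimately show ?thesis using cRS by (simp add: of_nat_diff)
  qed
  have cU: "card (R \<union> col_syms n A j0) = card R + f j0"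
  proof -
    have "R \<union> col_syms n A j0 = R \<union> (col_syms n A j0 - R)" by blast
    moreover have "card (R \<union> (col_syms n A j0 - R)) = card R + card (col_syms n A j0 - R)"
      by (rule card_Un_disjoint) (use finR finC in auto)
    ultimately show ?thesis unfolding f_def by simp
  qed
  have dpos: "real d > 0" using assms(4) by simp
  have "(\<beta> * real n ^ 2 - (real n - real d) * (real n - 1) - real (card R)) / real d \<le> real (f j0)"
    using keyr dpos assms(1) by (simp add: divide_le_eq mult.commute)
  moreover have "j0 < n" "is_clone n A (A i j0)" using j0(1) unfolding D_def by auto
  ultimately show ?thesis unfolding R_def[symmetric]
    by (intro exI[of _ j0]) (simp add: cU)
qed

end
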